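(* Let $R=k[x_1,\dots,x_n]$ with the standard grading, let $G$ be a group acting on $R$ by permuting the variables, and let $I\subset R$ be a homogeneous ideal. Let $\preceq$ be a monomial order. If $G$ acts monomially on $I$ up to degree $d$ and $\mathrm{in}_{\preceq}(I)$ is generated in degrees $\le d$, then $g(\mathrm{in}_{\preceq}(I))=\mathrm{in}_{\preceq_{g^{-1}}}(I)$ for every $g\in G$.
   Context: For $h\in R$, $\mathrm{mon}(h)$ is the set of monomials appearing in $h$ with nonzero coefficient. $G$ acts monomially on $I$ up to degree $d$ if for every $h\in I$ of degree $\le d$ and every $g\in G$ there is $h'\in I$ with $\mathrm{mon}(h')=\mathrm{mon}(g(h))$. For a monomial order $\preceq$ and $g\in G$, $\preceq_g$ is the monomial order defined by $a\preceq_g b\iff g(a)\preceq g(b)$. *)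

theory Defs
  imports "HOL-Library.Poly_Mapping"
begin

text \<open>Monomials are finitely supported exponent vectors; polynomials are finitely supported
  maps from monomials to coefficients, with the convolution product.\<close>

type_synonym 'v monom = "'v \<Rightarrow>\<^sub>0 nat"
type_synonym ('v, 'k) mpoly = "'v monom \<Rightarrow>\<^sub>0 'k"

definition mon :: "('v, 'k::zero) mpoly \<Rightarrow> 'v monom set" where
  "mon h = Poly_Mapping.keys h"

definition mdeg :: "'v monom \<Rightarrow> nat" where
  "mdeg m = (\<Sum>v\<in>Poly_Mapping.keys m. Poly_Mapping.lookup m v)"

definition deg_le :: "('v, 'k::zero) mpoly \<Rightarrow> nat \<Rightarrow> bool" where
  "deg_le h d \<longleftrightarrow> (\<forall>m\<in>mon h. mdeg m \<le> d)"

definition homogeneous :: "('v, 'k::zero) mpoly \<Rightarrow> bool" where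
  "homogeneous h \<longleftrightarrow> (\<exists>t. \<forall>m\<in>mon h. mdeg m = t)"

definition is_ideal :: "('v, 'k::comm_ring_1) mpoly set \<Rightarrow> bool" where
  "is_ideal I \<longleftrightarrow> 0 \<in> I \<and> (\<forall>a\<in>I. \<forall>b\<in>I. a + b \<in> I) \<and> (\<forall>r. \<forall>a\<in>I. r * a \<in> I)"

definition ideal_gen :: "('v, 'k::comm_ring_1) mpoly set \<Rightarrow> ('v, 'k) mpoly set" where
  "ideal_gen S = \<Inter>{J. is_ideal J \<and> S \<subseteq> J}"

definition homogeneous_ideal :: "('v, 'k::comm_ring_1) mpoly set \<Rightarrow> bool" where
  "homogeneous_ideal I \<longleftrightarrow> is_ideal I \<and> I = ideal_gen {f\<in>I. homogeneous f}"

text \<open>monomial orders (as a relation "ord a b" meaning a \<preceq> b)\<close>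
definition monomial_order :: "('v monom \<Rightarrow> 'v monom \<Rightarrow> bool) \<Rightarrow> bool" where
  "monomial_order ord \<longleftrightarrow>
     (\<forall>a. ord a a) \<and> (\<forall>a b. ord a b \<and> ord b a \<longrightarrow> a = b) \<and>
     (\<forall>a b c. ord a b \<and> ord b c \<longrightarrow> ord a c) \<and> (\<forall>a b. ord a b \<or> ord b a) \<and>
     (\<forall>a. ord 0 a) \<and> (\<forall>a b c. ord a b \<longrightarrow> ord (a + c) (b + c))"

text \<open>Action of a permutation g of the variables: x_v \<mapsto> x_(g v).
  On exponent vectors: (g m)(j) = m(g^{-1} j).\<close>
definition act_mon :: "('v::finite \<Rightarrow> 'v) \<Rightarrow> 'v monom \<Rightarrow> 'v monom" where
  "act_mon g m = Abs_poly_mapping (\<lambda>j. Poly_Mapping.lookup m (inv g j))"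

definition act_poly :: "('v::finite \<Rightarrow> 'v) \<Rightarrow> ('v, 'k::comm_monoid_add) mpoly \<Rightarrow> ('v, 'k) mpoly" where
  "act_poly g h = (\<Sum>m\<in>Poly_Mapping.keys h. Poly_Mapping.single (act_mon g m) (Poly_Mapping.lookup h m))"

definition perm_group :: "('v \<Rightarrow> 'v) set \<Rightarrow> bool" where
  "perm_group G \<longleftrightarrow> id \<in> G \<and> (\<forall>g\<in>G. bij g \<and> inv g \<in> G) \<and> (\<forall>g\<in>G. \<forall>h\<in>G. g \<circ> h \<in> G)"

definition acts_monomially :: "('v::finite \<Rightarrow> 'v) set \<Rightarrow> ('v, 'k::comm_monoid_add) mpoly set \<Rightarrow> nat \<Rightarrow> bool" where
  "acts_monomially G I d \<longleftrightarrow>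
     (\<forall>h\<in>I. deg_le h d \<longrightarrow> (\<forall>g\<in>G. \<exists>h'\<in>I. mon h' = mon (act_poly g h)))"

definition twist_order :: "('v monom \<Rightarrow> 'v monom \<Rightarrow> bool) \<Rightarrow> ('v::finite \<Rightarrow> 'v) \<Rightarrow> 'v monom \<Rightarrow> 'v monom \<Rightarrow> bool" where
  "twist_order ord g a b \<longleftrightarrow> ord (act_mon g a) (act_mon g b)"

definition lead_mon :: "('v monom \<Rightarrow> 'v monom \<Rightarrow> bool) \<Rightarrow> ('v, 'k::zero) mpoly \<Rightarrow> 'v monom" where
  "lead_mon ord h = (THE m. m \<in> Poly_Mapping.keys h \<and> (\<forall>m'\<in>Poly_Mapping.keys h. ord m' m))"

definition initial_ideal :: "('v monom \<Rightarrow> 'v monom \<Rightarrow> bool) \<Rightarrow> ('v, 'k::comm_ring_1) mpoly set \<Rightarrow> ('v, 'k) mpoly set" where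
  "initial_ideal ord I = ideal_gen {Poly_Mapping.single (lead_mon ord h) 1 | h. h \<in> I \<and> h \<noteq> 0}"

definition generated_in_degrees_le :: "('v, 'k::comm_ring_1) mpoly set \<Rightarrow> nat \<Rightarrow> bool" where
  "generated_in_degrees_le J d \<longleftrightarrow> J = ideal_gen {f\<in>J. deg_le f d}"

end

theory Submission imports Defs "HOL.Vector_Spaces" begin

abbreviation lk where "lk \<equiv> Poly_Mapping.lookup"
abbreviation ks where "ks \<equiv> Poly_Mapping.keys"

definition sc :: "'k::field \<Rightarrow> ('v,'k) mpoly \<Rightarrow> ('v,'k) mpoly" where
  "sc c p = Poly_Mapping.single 0 c * p"

lemma lookup_single_mult_add:
  "lk (Poly_Mapping.single a c * p) (a + m) = c * lk (p::('v, 'k::comm_ring_1) mpoly) m"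
  by (simp add: lookup_mult lookup_single when_mult Sum_any_right_distrib mult_when eq_commute[of m])

lemma lookup_sc: "lk (sc c p) m = c * lk p m"
  using lookup_single_mult_add[of 0 c p m] by (simp add: sc_def)

interpretation pv: vector_space "sc :: 'k::field \<Rightarrow> ('v,'k) mpoly \<Rightarrow> ('v,'k) mpoly"
  by unfold_locales (simp_all add: sc_def distrib_left single_add distrib_right mult.assoc[symmetric] mult_single)


section \<open>Ideals\<close>

lemma ideal_gen_ideal: "is_ideal (ideal_gen S)"
  unfolding ideal_gen_def is_ideal_def by auto

lemma ideal_gen_sub: "S \<subseteq> ideal_gen S"
  unfolding ideal_gen_def by auto

lemma ideal_gen_min: "is_ideal J \<Longrightarrow> S \<subseteq> J \<Longrightarrow> ideal_gen S \<subseteq> J"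
  unfolding ideal_gen_def by auto

lemma ideal_zero: "is_ideal I \<Longrightarrow> 0 \<in> I"
  unfolding is_ideal_def by auto

lemma ideal_add: "is_ideal I \<Longrightarrow> a \<in> I \<Longrightarrow> b \<in> I \<Longrightarrow> a + b \<in> I"
  unfolding is_ideal_def by auto

lemma ideal_mult: "is_ideal I \<Longrightarrow> a \<in> I \<Longrightarrow> r * a \<in> I"
  unfolding is_ideal_def by auto

lemma ideal_sc: "is_ideal I \<Longrightarrow> a \<in> I \<Longrightarrow> sc c a \<in> I"
  unfolding sc_def by (rule ideal_mult)

lemma ideal_sum: "is_ideal I \<Longrightarrow> (\<And>x. x \<in> A \<Longrightarrow> f x \<in> I) \<Longrightarrow> sum f A \<in> I"
  by (induction A rule: infinite_finite_induct) (auto simp: ideal_zero ideal_add)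

lemma poly_expand: "p = (\<Sum>m\<in>ks p. Poly_Mapping.single m (lk p m))"
  by (simp add: poly_mapping_eq_iff lookup_sum lookup_single fun_eq_iff when_def in_keys_iff)

section \<open>Degrees and the action on monomials\<close>

lemma mdeg_UNIV: "mdeg (m :: 'v::finite monom) = (\<Sum>v\<in>UNIV. lk m v)"
  unfolding mdeg_def by (rule sum.mono_neutral_left) (auto simp: in_keys_iff)

lemma mdeg_add: "mdeg ((a :: 'v::finite monom) + b) = mdeg a + mdeg b"
  by (simp add: mdeg_UNIV lookup_add sum.distrib)

lemma lookup_le_mdeg: "lk (m :: 'v::finite monom) v \<le> mdeg m"
  unfolding mdeg_UNIV by (rule member_le_sum) auto

lemma lookup_act_mon: "lk (act_mon g m) j = lk m (inv g j)"
  unfolding act_mon_def by (simp add: lookup_Abs_poly_mapping)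

lemma act_mon_add: "act_mon g (a + b) = act_mon g a + act_mon g b"
  by (simp add: poly_mapping_eq_iff fun_eq_iff lookup_act_mon lookup_add)

lemma act_mon_zero: "act_mon g 0 = 0"
  by (simp add: poly_mapping_eq_iff fun_eq_iff lookup_act_mon)

lemma act_mon_inv_cancel: "bij g \<Longrightarrow> act_mon (inv g) (act_mon g m) = m"
  by (simp add: poly_mapping_eq_iff fun_eq_iff lookup_act_mon inv_inv_eq bij_is_inj)

lemma act_mon_inv_cancel2: "bij g \<Longrightarrow> act_mon g (act_mon (inv g) m) = m"
  using act_mon_inv_cancel[of "inv g" m] by (simp add: bij_imp_bij_inv inv_inv_eq)

lemma act_mon_inj: "bij g \<Longrightarrow> inj (act_mon g)"
  by (metis act_mon_inv_cancel injI)

lemma mdeg_act_mon: "bij g \<Longrightarrow> mdeg (act_mon g (m :: 'v::finite monom)) = mdeg m"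
  unfolding mdeg_UNIV lookup_act_mon
  by (rule sum.reindex_bij_betw[of "inv g" UNIV UNIV "lk m"]) (simp add: bij_imp_bij_inv)

section \<open>Leading monomials\<close>

definition lin :: "('a \<Rightarrow> 'a \<Rightarrow> bool) \<Rightarrow> bool" where
  "lin ord \<longleftrightarrow> (\<forall>a. ord a a) \<and> (\<forall>a b. ord a b \<and> ord b a \<longrightarrow> a = b) \<and>
     (\<forall>a b c. ord a b \<and> ord b c \<longrightarrow> ord a c) \<and> (\<forall>a b. ord a b \<or> ord b a)"

lemma mo_lin: "monomial_order ord \<Longrightarrow> lin ord"
  unfolding monomial_order_def lin_def by (intro conjI) (elim conjE; assumption)+

lemma lin_refl: "lin ord \<Longrightarrow> ord a a"
  unfolding lin_def by blast
lemma lin_antisym: "lin ord \<Longrightarrow> ord a b \<Longrightarrow> ord b a \<Longrightarrow> a = b"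
  unfolding lin_def by blast
lemma lin_trans: "lin ord \<Longrightarrow> ord a b \<Longrightarrow> ord b c \<Longrightarrow> ord a c"
  unfolding lin_def by metis
lemma lin_total: "lin ord \<Longrightarrow> \<not> ord a b \<Longrightarrow> ord b a"
  unfolding lin_def by metis

lemma finite_max:
  assumes "lin ord" "finite S" "S \<noteq> {}"
  shows "\<exists>x\<in>S. \<forall>y\<in>S. ord y x"
  using assms(2,3)
proof (induction S rule: finite_ne_induct)
  case (singleton x) then show ?case using lin_refl[OF assms(1)] by simp
next
  case (insert x F)
  then obtain z where z: "z \<in> F" "\<And>y. y \<in> F \<Longrightarrow> ord y z" by blast
  show ?case
  proof (cases "ord x z")
    case True then show ?thesis using z by blast
  next
    case False
    then have zx: "ord z x" using lin_total[OF assms(1)] by blast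
    have "ord y x" if "y \<in> insert x F" for y
    proof (cases "y = x")
      case True then show ?thesis using lin_refl[OF assms(1)] by simp
    next
      case False then have "ord y z" using z that by blast
      then show ?thesis using zx lin_trans[OF assms(1)] by blast
    qed
    then show ?thesis by blast
  qed
qed

lemma lead_eq:
  assumes "lin ord" "\<mu> \<in> ks h" "\<And>m. m \<in> ks h \<Longrightarrow> ord m \<mu>"
  shows "lead_mon ord h = \<mu>"
  unfolding lead_mon_def
proof (rule the_equality)
  show "\<mu> \<in> ks h \<and> (\<forall>m'\<in>ks h. ord m' \<mu>)" using assms by blast
next
  fix m assume m: "m \<in> ks h \<and> (\<forall>m'\<in>ks h. ord m' m)"
  then have "ord m \<mu>" using assms(3) by blast
  moreover have "ord \<mu> m" using m assms(2) by blast
  ultimately show "m = \<mu>" using lin_antisym[OF assms(1)] by blast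
qed

lemma lead_in:
  assumes "lin ord" "h \<noteq> 0"
  shows "lead_mon ord h \<in> ks h" "\<And>m. m \<in> ks h \<Longrightarrow> ord m (lead_mon ord h)"
proof -
  have "ks h \<noteq> {}" using assms(2) by simp
  then obtain x where x: "x \<in> ks h" "\<forall>y\<in>ks h. ord y x"
    using finite_max[OF assms(1) finite_keys] by blast
  then have "lead_mon ord h = x" using lead_eq[OF assms(1)] by blast
  then show "lead_mon ord h \<in> ks h" "\<And>m. m \<in> ks h \<Longrightarrow> ord m (lead_mon ord h)" using x by auto
qed

lemma lead_keys_eq: "ks h = ks h' \<Longrightarrow> lead_mon ord h = lead_mon ord h'"
  unfolding lead_mon_def by simp


lemma mo_add: "monomial_order ord \<Longrightarrow> ord a b \<Longrightarrow> ord (c + a) (c + b)"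
  unfolding monomial_order_def by (metis add.commute)

lemma twist_mo:
  assumes mo: "monomial_order ord" and g: "bij g"
  shows "monomial_order (twist_order ord g)"
proof -
  have l: "lin ord" using mo by (rule mo_lin)
  have inj: "inj (act_mon g)" using g by (rule act_mon_inj)
  show ?thesis unfolding monomial_order_def twist_order_def
  proof (intro conjI allI impI)
    fix a show "ord (act_mon g a) (act_mon g a)" using lin_refl[OF l] .
  next
    fix a b assume "ord (act_mon g a) (act_mon g b) \<and> ord (act_mon g b) (act_mon g a)"
    then have "act_mon g a = act_mon g b" using lin_antisym[OF l] by blast
    then show "a = b" using inj by (simp add: inj_eq)
  next
    fix a b c assume "ord (act_mon g a) (act_mon g b) \<and> ord (act_mon g b) (act_mon g c)"
    then show "ord (act_mon g a) (act_mon g c)" using lin_trans[OF l] by blast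
  next
    fix a b show "ord (act_mon g a) (act_mon g b) \<or> ord (act_mon g b) (act_mon g a)"
      using lin_total[OF l] by blast
  next
    fix a show "ord (act_mon g 0) (act_mon g a)" using mo unfolding act_mon_zero monomial_order_def by blast
  next
    fix a b c assume "ord (act_mon g a) (act_mon g b)"
    then show "ord (act_mon g (a + c)) (act_mon g (b + c))"
      using mo unfolding act_mon_add monomial_order_def by blast
  qed
qed

section \<open>Action on polynomials\<close>

lemma lookup_act_poly:
  assumes g: "bij g"
  shows "lk (act_poly g h) m = lk h (act_mon (inv g) m)"
proof -
  have "lk (act_poly g h) m = (\<Sum>\<mu>\<in>ks h. if act_mon g \<mu> = m then lk h \<mu> else 0)"
    unfolding act_poly_def lookup_sum lookup_single when_def by (simp add: eq_commute)
  also have "\<dots> = (\<Sum>\<mu>\<in>ks h. if \<mu> = act_mon (inv g) m then lk h \<mu> else 0)"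
    by (rule sum.cong) (auto simp: act_mon_inv_cancel[OF g] act_mon_inv_cancel2[OF g])
  also have "\<dots> = lk h (act_mon (inv g) m)"
    by (simp add: in_keys_iff)
  finally show ?thesis .
qed

lemma keys_act_poly:
  assumes g: "bij g"
  shows "ks (act_poly g h) = act_mon g ` ks h"
proof
  show "ks (act_poly g h) \<subseteq> act_mon g ` ks h"
  proof
    fix m assume "m \<in> ks (act_poly g h)"
    then have "act_mon (inv g) m \<in> ks h" by (simp add: in_keys_iff lookup_act_poly[OF g])
    then show "m \<in> act_mon g ` ks h" using act_mon_inv_cancel2[OF g, of m] by force
  qed
next
  show "act_mon g ` ks h \<subseteq> ks (act_poly g h)"
    by (auto simp: in_keys_iff lookup_act_poly[OF g] act_mon_inv_cancel[OF g])
qed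

lemma act_poly_inv:
  assumes g: "bij g"
  shows "act_poly g (act_poly (inv g) f) = f"
proof -
  have gi: "bij (inv g)" using g by (rule bij_imp_bij_inv)
  show ?thesis
    by (simp add: poly_mapping_eq_iff fun_eq_iff lookup_act_poly[OF g] lookup_act_poly[OF gi]
        inv_inv_eq[OF g] act_mon_inv_cancel[OF gi] act_mon_inv_cancel2[OF g])
qed

lemma lead_twist_image:
  assumes mo: "monomial_order ord" and g: "bij g" and h: "h \<noteq> 0"
    and k: "ks h' = act_mon g ` ks h"
  shows "lead_mon (twist_order ord (inv g)) h' = act_mon g (lead_mon ord h)"
proof -
  have l: "lin ord" using mo by (rule mo_lin)
  have l': "lin (twist_order ord (inv g))"
    using twist_mo[OF mo bij_imp_bij_inv[OF g]] by (rule mo_lin)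
  note li = lead_in[OF l h]
  show ?thesis
  proof (rule lead_eq[OF l'])
    show "act_mon g (lead_mon ord h) \<in> ks h'" using k li by blast
  next
    fix m assume "m \<in> ks h'"
    then obtain m0 where "m0 \<in> ks h" "m = act_mon g m0" using k by blast
    then show "twist_order ord (inv g) m (act_mon g (lead_mon ord h))"
      unfolding twist_order_def using li by (simp add: act_mon_inv_cancel[OF g])
  qed
qed

section \<open>Monomial ideals\<close>

lemma keys_single_mult:
  "ks (Poly_Mapping.single a (1::'k::comm_ring_1) * (h::('v,'k) mpoly)) = (\<lambda>m. a + m) ` ks h"
proof
  show "ks (Poly_Mapping.single a 1 * h) \<subseteq> (\<lambda>m. a + m) ` ks h"
  proof
    fix m assume m: "m \<in> ks (Poly_Mapping.single a 1 * h)"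
    then obtain b where "b \<in> ks h" "m = a + b" using keys_mult[of "Poly_Mapping.single a 1" h] by auto
    then show "m \<in> (\<lambda>m. a + m) ` ks h" by blast
  qed
next
  show "(\<lambda>m. a + m) ` ks h \<subseteq> ks (Poly_Mapping.single a 1 * h)"
    by (auto simp: in_keys_iff lookup_single_mult_add)
qed

definition dv :: "('v, 'k::zero) mpoly set \<Rightarrow> 'v monom \<Rightarrow> bool" where
  "dv T m \<longleftrightarrow> (\<exists>t\<in>T. \<exists>\<mu>\<in>ks t. \<exists>\<alpha>. m = \<alpha> + \<mu>)"

lemma dv_add: "dv T m \<Longrightarrow> dv T (x + m)"
  unfolding dv_def by (metis add.assoc)

definition dvset :: "('v, 'k::comm_ring_1) mpoly set \<Rightarrow> ('v, 'k) mpoly set" where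
  "dvset T = {f. \<forall>m\<in>ks f. dv T m}"

lemma dvset_ideal: "is_ideal (dvset T)"
proof -
  have z: "0 \<in> dvset T" by (simp add: dvset_def)
  have ad: "a + b \<in> dvset T" if "a \<in> dvset T" "b \<in> dvset T" for a b
  proof -
    have "\<forall>m\<in>ks a. dv T m" "\<forall>m\<in>ks b. dv T m" using that by (auto simp: dvset_def)
    then have "\<forall>m\<in>ks (a + b). dv T m" using keys_add[of a b] by blast
    then show ?thesis by (simp add: dvset_def)
  qed
  have mu: "r * a \<in> dvset T" if a: "a \<in> dvset T" for r a
  proof -
    have a': "\<forall>m\<in>ks a. dv T m" using a by (simp add: dvset_def)
    have "dv T m" if mk: "m \<in> ks (r * a)" for m
    proof -
      obtain x y where "y \<in> ks a" "m = x + y" using keys_mult[of r a] mk by auto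
      then show ?thesis using a' dv_add by blast
    qed
    then show ?thesis by (simp add: dvset_def)
  qed
  show ?thesis unfolding is_ideal_def
  proof (intro conjI)
    show "0 \<in> dvset T" by (rule z)
    show "\<forall>a\<in>dvset T. \<forall>b\<in>dvset T. a + b \<in> dvset T" using ad by simp
    show "\<forall>r. \<forall>a\<in>dvset T. r * a \<in> dvset T" using mu by simp
  qed
qed

lemma ideal_gen_keys:
  fixes T :: "('v, 'k::comm_ring_1) mpoly set"
  assumes "f \<in> ideal_gen T" "m \<in> ks f"
  shows "\<exists>t\<in>T. \<exists>\<mu>\<in>ks t. \<exists>\<alpha>. m = \<alpha> + \<mu>"
proof -
  have "T \<subseteq> dvset T" unfolding dvset_def dv_def
  proof (auto)
    fix x m assume "x \<in> T" "m \<in> ks x"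
    moreover have "m = 0 + m" by simp
    ultimately show "\<exists>t\<in>T. \<exists>\<mu>\<in>ks t. \<exists>\<alpha>. m = \<alpha> + \<mu>" by blast
  qed
  then have "ideal_gen T \<subseteq> dvset T" by (rule ideal_gen_min[OF dvset_ideal])
  then show ?thesis using assms unfolding dvset_def dv_def by blast
qed

definition LM :: "('v monom \<Rightarrow> 'v monom \<Rightarrow> bool) \<Rightarrow> ('v, 'k::comm_ring_1) mpoly set \<Rightarrow> 'v monom set" where
  "LM ord I = {lead_mon ord h | h. h \<in> I \<and> h \<noteq> 0}"

lemma LM_up:
  assumes I: "is_ideal I" and mo: "monomial_order ord" and mu: "\<mu> \<in> LM ord I"
  shows "\<alpha> + \<mu> \<in> LM ord I"
proof -
  have l: "lin ord" using mo by (rule mo_lin)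
  obtain h where h: "h \<in> I" "h \<noteq> 0" "\<mu> = lead_mon ord h" using mu unfolding LM_def by blast
  note li = lead_in[OF l h(2)]
  let ?h = "Poly_Mapping.single \<alpha> 1 * h"
  have k: "ks ?h = (\<lambda>m. \<alpha> + m) ` ks h" by (rule keys_single_mult)
  have "lead_mon ord ?h = \<alpha> + \<mu>"
  proof (rule lead_eq[OF l])
    show "\<alpha> + \<mu> \<in> ks ?h" using k li h(3) by blast
  next
    fix m assume "m \<in> ks ?h"
    then obtain m0 where "m0 \<in> ks h" "m = \<alpha> + m0" using k by blast
    then show "ord m (\<alpha> + \<mu>)" using li h(3) mo_add[OF mo] by blast
  qed
  moreover have "?h \<in> I" using I h(1) by (rule ideal_mult)
  moreover have "?h \<noteq> 0" using k li by (metis empty_iff image_eqI keys_zero)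
  ultimately have "\<exists>h. \<alpha> + \<mu> = lead_mon ord h \<and> h \<in> I \<and> h \<noteq> 0" by metis
  then show ?thesis by (simp add: LM_def)
qed

definition gens :: "('v monom \<Rightarrow> 'v monom \<Rightarrow> bool) \<Rightarrow> ('v, 'k::comm_ring_1) mpoly set \<Rightarrow> ('v, 'k) mpoly set" where
  "gens ord I = {Poly_Mapping.single (lead_mon ord h) 1 | h. h \<in> I \<and> h \<noteq> 0}"

lemma initial_gens: "initial_ideal ord I = ideal_gen (gens ord I)"
  unfolding initial_ideal_def gens_def ..

lemma gensE: "t \<in> gens ord I \<Longrightarrow> \<exists>h. t = Poly_Mapping.single (lead_mon ord h) 1 \<and> h \<in> I \<and> h \<noteq> 0"
  unfolding gens_def by blast

lemma gensI: "h \<in> I \<Longrightarrow> h \<noteq> 0 \<Longrightarrow> Poly_Mapping.single (lead_mon ord h) 1 \<in> gens ord I"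
  unfolding gens_def by blast

lemma LME: "m \<in> LM ord I \<Longrightarrow> \<exists>h. m = lead_mon ord h \<and> h \<in> I \<and> h \<noteq> 0"
  unfolding LM_def by blast

lemma LMI: "h \<in> I \<Longrightarrow> h \<noteq> 0 \<Longrightarrow> lead_mon ord h \<in> LM ord I"
  unfolding LM_def by blast

lemma in_char:
  fixes I :: "('v, 'k::comm_ring_1) mpoly set"
  assumes I: "is_ideal I" and mo: "monomial_order ord"
  shows "initial_ideal ord I = {f. ks f \<subseteq> LM ord I}"
proof
  show "initial_ideal ord I \<subseteq> {f. ks f \<subseteq> LM ord I}"
  proof (rule subsetI, rule CollectI, rule subsetI)
    fix f m assume f: "f \<in> initial_ideal ord I" and m: "m \<in> ks f"
    have "\<exists>t\<in>gens ord I. \<exists>\<mu>\<in>ks t. \<exists>\<alpha>. m = \<alpha> + \<mu>"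
      by (rule ideal_gen_keys[OF f[unfolded initial_gens] m])
    then obtain t \<mu> \<alpha> where t: "t \<in> gens ord I" "\<mu> \<in> ks t" "m = \<alpha> + \<mu>"
      by (elim bexE exE)
    obtain h where h: "t = Poly_Mapping.single (lead_mon ord h) 1" "h \<in> I" "h \<noteq> 0"
      using gensE[OF t(1)] by (elim exE conjE)
    have "\<mu> = lead_mon ord h" using t(2) unfolding h(1) by simp
    then have "\<mu> \<in> LM ord I" using LMI[OF h(2,3)] by simp
    then show "m \<in> LM ord I" unfolding t(3) by (rule LM_up[OF I mo])
  qed
next
  show "{f. ks f \<subseteq> LM ord I} \<subseteq> initial_ideal ord I"
  proof
    fix f :: "('v, 'k) mpoly" assume f: "f \<in> {f. ks f \<subseteq> LM ord I}"
    have "(\<Sum>m\<in>ks f. Poly_Mapping.single m (lk f m)) \<in> initial_ideal ord I"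
      unfolding initial_gens
    proof (rule ideal_sum[OF ideal_gen_ideal])
      fix m assume "m \<in> ks f"
      then have "m \<in> LM ord I" using f by blast
      then obtain h where h: "m = lead_mon ord h" "h \<in> I" "h \<noteq> 0" using LME by blast
      then have "Poly_Mapping.single m 1 \<in> gens ord I"
        using gensI[OF h(2,3)] by simp
      then have "Poly_Mapping.single m 1 \<in> ideal_gen (gens ord I)"
        using ideal_gen_sub by blast
      then have "Poly_Mapping.single 0 (lk f m) * Poly_Mapping.single m 1 \<in> ideal_gen (gens ord I)"
        by (rule ideal_mult[OF ideal_gen_ideal])
      then show "Poly_Mapping.single m (lk f m) \<in> ideal_gen (gens ord I)"
        by (simp add: mult_single)
    qed
    then show "f \<in> initial_ideal ord I" using poly_expand[of f] by metis
  qed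
qed


section \<open>Homogeneous components\<close>

definition hcomp :: "nat \<Rightarrow> ('v, 'k::zero) mpoly \<Rightarrow> ('v, 'k) mpoly" where
  "hcomp t f = Abs_poly_mapping (\<lambda>m. if mdeg m = t then lk f m else 0)"

lemma lookup_comp: "lk (hcomp t f) m = (if mdeg m = t then lk f m else 0)"
proof -
  have "finite {m. (if mdeg m = t then lk f m else 0) \<noteq> 0}"
    by (rule finite_subset[of _ "ks f"]) (auto simp: in_keys_iff)
  then show ?thesis unfolding hcomp_def by simp
qed

lemma keys_comp: "ks (hcomp t f) = {m \<in> ks f. mdeg m = t}"
  by (auto simp: in_keys_iff lookup_comp split: if_splits)

lemma comp_add: "hcomp t (a + b) = hcomp t a + hcomp t (b::('v,'k::comm_monoid_add) mpoly)"
  by (simp add: poly_mapping_eq_iff fun_eq_iff lookup_comp lookup_add)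

lemma comp_zero: "hcomp t 0 = 0"
  by (simp add: poly_mapping_eq_iff fun_eq_iff lookup_comp)

lemma comp_sum: "hcomp t (sum f A) = (\<Sum>x\<in>A. hcomp t (f x :: ('v,'k::comm_monoid_add) mpoly))"
  by (induction A rule: infinite_finite_induct) (simp_all add: comp_zero comp_add)

lemma lookup_single_mult_other:
  assumes "\<And>\<mu>. m \<noteq> a + \<mu>"
  shows "lk (Poly_Mapping.single a c * (p::('v, 'k::comm_ring_1) mpoly)) m = 0"
proof (rule ccontr)
  assume "lk (Poly_Mapping.single a c * p) m \<noteq> 0"
  then have "m \<in> ks (Poly_Mapping.single a c * p)" by (simp add: in_keys_iff)
  then obtain x y where "x \<in> ks (Poly_Mapping.single a c)" "m = x + y" using keys_mult by blast
  then have "m = a + y" by (simp split: if_splits)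
  then show False using assms by blast
qed

lemma comp_single_mult:
  fixes a :: "('v::finite, 'k::comm_ring_1) mpoly"
  shows "hcomp t (Poly_Mapping.single \<alpha> c * a) =
    (if mdeg \<alpha> \<le> t then Poly_Mapping.single \<alpha> c * hcomp (t - mdeg \<alpha>) a else 0)"
proof (rule poly_mapping_eqI)
  fix m
  show "lk (hcomp t (Poly_Mapping.single \<alpha> c * a)) m =
    lk (if mdeg \<alpha> \<le> t then Poly_Mapping.single \<alpha> c * hcomp (t - mdeg \<alpha>) a else 0) m"
  proof (cases "\<exists>\<mu>. m = \<alpha> + \<mu>")
    case True
    then obtain \<mu> where m: "m = \<alpha> + \<mu>" by blast
    show ?thesis unfolding m
      by (auto simp: lookup_comp lookup_single_mult_add mdeg_add)
  next
    case False
    then have "\<And>\<mu>. m \<noteq> \<alpha> + \<mu>" by blast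
    then show ?thesis
      by (simp add: lookup_comp lookup_single_mult_other)
  qed
qed

lemma comp_homog:
  assumes "homogeneous f"
  shows "\<exists>t0. \<forall>t. hcomp t f = (if t = t0 then f else 0)"
proof -
  obtain t0 where t0: "\<And>m. m \<in> ks f \<Longrightarrow> mdeg m = t0" using assms unfolding homogeneous_def mon_def by blast
  have "hcomp t f = (if t = t0 then f else 0)" for t
  proof (rule poly_mapping_eqI)
    fix m
    show "lk (hcomp t f) m = lk (if t = t0 then f else 0) m"
      using t0[of m] by (auto simp: lookup_comp in_keys_iff)
  qed
  then show ?thesis by blast
qed

lemma comp_in_ideal:
  fixes I :: "('v::finite, 'k::comm_ring_1) mpoly set"
  assumes hI: "homogeneous_ideal I" and f: "f \<in> I"
  shows "hcomp t f \<in> I"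
proof -
  have I: "is_ideal I" using hI unfolding homogeneous_ideal_def by blast
  define J where "J = {f. \<forall>t. hcomp t f \<in> I}"
  have z: "0 \<in> J" unfolding J_def by (simp add: comp_zero ideal_zero[OF I])
  have ad: "a + b \<in> J" if "a \<in> J" "b \<in> J" for a b
    using that unfolding J_def by (simp add: comp_add ideal_add[OF I])
  have mu: "r * a \<in> J" if a: "a \<in> J" for r a
  proof -
    have "hcomp t (r * a) \<in> I" for t
    proof -
      have "r * a = (\<Sum>\<alpha>\<in>ks r. Poly_Mapping.single \<alpha> (lk r \<alpha>) * a)"
        by (subst poly_expand[of r]) (simp add: sum_distrib_right)
      then have "hcomp t (r * a) = (\<Sum>\<alpha>\<in>ks r. hcomp t (Poly_Mapping.single \<alpha> (lk r \<alpha>) * a))"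
        by (simp add: comp_sum)
      also have "\<dots> \<in> I"
      proof (rule ideal_sum[OF I])
        fix \<alpha> :: "'v monom"
        have "hcomp (t - mdeg \<alpha>) a \<in> I" using a unfolding J_def by blast
        then show "hcomp t (Poly_Mapping.single \<alpha> (lk r \<alpha>) * a) \<in> I"
          by (simp add: comp_single_mult ideal_zero[OF I] ideal_mult[OF I])
      qed
      finally show ?thesis .
    qed
    then show ?thesis unfolding J_def by blast
  qed
  have "is_ideal J" unfolding is_ideal_def
  proof (intro conjI)
    show "0 \<in> J" by (rule z)
    show "\<forall>a\<in>J. \<forall>b\<in>J. a + b \<in> J" using ad by simp
    show "\<forall>r. \<forall>a\<in>J. r * a \<in> J" using mu by simp
  qed
  moreover have "{f \<in> I. homogeneous f} \<subseteq> J"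
  proof
    fix g assume g: "g \<in> {f \<in> I. homogeneous f}"
    then obtain t0 where "\<forall>t. hcomp t g = (if t = t0 then g else 0)" using comp_homog by blast
    then show "g \<in> J" using g unfolding J_def by (simp add: ideal_zero[OF I])
  qed
  ultimately have "ideal_gen {f \<in> I. homogeneous f} \<subseteq> J" by (rule ideal_gen_min)
  then have "I \<subseteq> J" using hI unfolding homogeneous_ideal_def by simp
  then show ?thesis using f unfolding J_def by blast
qed

lemma lead_comp:
  assumes l: "lin ord" and h: "h \<noteq> 0"
  shows "hcomp (mdeg (lead_mon ord h)) h \<noteq> 0" "lead_mon ord (hcomp (mdeg (lead_mon ord h)) h) = lead_mon ord h"
proof -
  note li = lead_in[OF l h]
  have k: "lead_mon ord h \<in> ks (hcomp (mdeg (lead_mon ord h)) h)" using li by (simp add: keys_comp)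
  then show "hcomp (mdeg (lead_mon ord h)) h \<noteq> 0" by auto
  show "lead_mon ord (hcomp (mdeg (lead_mon ord h)) h) = lead_mon ord h"
    by (rule lead_eq[OF l k]) (simp add: keys_comp li)
qed


section \<open>Linear algebra\<close>

lemma keys_sc: "ks (sc c p) \<subseteq> ks p"
  by (auto simp: in_keys_iff lookup_sc)

lemma indep_leads:
  fixes C :: "('v, 'k::field) mpoly set"
  assumes l: "lin ord" and fin: "finite C" and nz: "0 \<notin> C" and inj: "inj_on (lead_mon ord) C"
  shows "pv.independent C"
proof
  assume "pv.dependent C"
  then obtain u v0 where v0: "v0 \<in> C" "u v0 \<noteq> 0" and s: "(\<Sum>v\<in>C. sc (u v) v) = 0"
    using pv.dependent_finite[OF fin] by blast
  define S where "S = {v \<in> C. u v \<noteq> 0}"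
  have finS: "finite (lead_mon ord ` S)" using fin unfolding S_def by simp
  have neS: "lead_mon ord ` S \<noteq> {}" using v0 unfolding S_def by blast
  obtain l0 where l0: "l0 \<in> lead_mon ord ` S" "\<And>y. y \<in> lead_mon ord ` S \<Longrightarrow> ord y l0"
    using finite_max[OF l finS neS] by blast
  then obtain w where w: "w \<in> S" "l0 = lead_mon ord w" by blast
  have wC: "w \<in> C" "u w \<noteq> 0" using w unfolding S_def by auto
  have wnz: "w \<noteq> 0" using wC nz by blast
  have zero: "u v * lk v l0 = 0" if v: "v \<in> C" "v \<noteq> w" for v
  proof (cases "u v = 0")
    case True then show ?thesis by simp
  next
    case False
    then have vS: "v \<in> S" using v unfolding S_def by blast
    have vnz: "v \<noteq> 0" using v nz by blast
    have le: "ord (lead_mon ord v) l0" using l0(2) vS by blast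
    have ne: "lead_mon ord v \<noteq> l0" using inj v wC w(2) unfolding inj_on_def by metis
    have "l0 \<notin> ks v"
    proof
      assume "l0 \<in> ks v"
      then have "ord l0 (lead_mon ord v)" using lead_in(2)[OF l vnz] by blast
      then show False using le ne lin_antisym[OF l le] by blast
    qed
    then show ?thesis by (simp add: in_keys_iff)
  qed
  have "0 = lk (\<Sum>v\<in>C. sc (u v) v) l0" using s by simp
  also have "\<dots> = (\<Sum>v\<in>C. u v * lk v l0)" by (simp add: lookup_sum lookup_sc)
  also have "\<dots> = u w * lk w l0"
    by (rule sum.remove[OF fin wC(1), THEN trans]) (simp add: zero sum.neutral)
  finally have "u w * lk w l0 = 0" by simp
  moreover have "lk w l0 \<noteq> 0" using lead_in(1)[OF l wnz] w(2) by (simp add: in_keys_iff)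
  ultimately show False using wC(2) by simp
qed

lemma span_leads:
  fixes W B :: "('v, 'k::field) mpoly set"
  assumes l: "lin ord" and finM: "finite M"
    and WM: "\<And>f. f \<in> W \<Longrightarrow> ks f \<subseteq> M"
    and Wcl: "\<And>f b c. f \<in> W \<Longrightarrow> b \<in> W \<Longrightarrow> f + sc c b \<in> W"
    and BW: "B \<subseteq> W" and Bnz: "0 \<notin> B"
    and lead: "\<And>f. f \<in> W \<Longrightarrow> f \<noteq> 0 \<Longrightarrow> \<exists>b\<in>B. lead_mon ord b = lead_mon ord f"
  shows "W \<subseteq> pv.span B"
proof -
  define D where "D f = {\<nu> \<in> M. \<exists>\<mu>\<in>ks f. ord \<nu> \<mu>}" for f :: "('v, 'k) mpoly"
  have main: "\<forall>f. f \<in> W \<longrightarrow> card (D f) = n \<longrightarrow> f \<in> pv.span B" for n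
  proof (induction n rule: less_induct)
    case (less n)
    show ?case
    proof (intro allI impI)
      fix f assume fW: "f \<in> W" and cn: "card (D f) = n"
      show "f \<in> pv.span B"
      proof (cases "f = 0")
        case True then show ?thesis by (simp add: pv.span_zero)
      next
        case False
        note lf = lead_in[OF l False]
        define ell where "ell = lead_mon ord f"
        obtain b where b: "b \<in> B" "lead_mon ord b = ell" using lead[OF fW False] unfolding ell_def by blast
        have bnz: "b \<noteq> 0" using b Bnz by blast
        note lb = lead_in[OF l bnz]
        have bW: "b \<in> W" using b BW by blast
        define c where "c = - (lk f ell / lk b ell)"
        define f' where "f' = f + sc c b"
        have f'W: "f' \<in> W" unfolding f'_def using Wcl[OF fW bW] .
        have bl: "lk b ell \<noteq> 0" using lb(1) b(2) by (simp add: in_keys_iff)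
        have "lk f' ell = 0" unfolding f'_def c_def using bl by (simp add: lookup_add lookup_minus lookup_sc)
        then have nl: "ell \<notin> ks f'" by (simp add: in_keys_iff)
        have kf': "\<And>\<mu>. \<mu> \<in> ks f' \<Longrightarrow> ord \<mu> ell"
        proof -
          fix \<mu> assume "\<mu> \<in> ks f'"
          moreover have "ks f' \<subseteq> ks f \<union> ks (sc c b)" unfolding f'_def by (rule keys_add)
          ultimately have "\<mu> \<in> ks f \<or> \<mu> \<in> ks b" using keys_sc[of c b] by blast
          then show "ord \<mu> ell"
          proof
            assume "\<mu> \<in> ks f" then show ?thesis using lf(2) unfolding ell_def by blast
          next
            assume "\<mu> \<in> ks b" then have "ord \<mu> (lead_mon ord b)" using lb(2) by blast
            then show ?thesis using b(2) by simp
          qed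
        qed
        have sub: "D f' \<subseteq> D f - {ell}"
        proof
          fix \<nu> assume "\<nu> \<in> D f'"
          then obtain \<mu> where nu: "\<nu> \<in> M" "\<mu> \<in> ks f'" "ord \<nu> \<mu>" unfolding D_def by blast
          have "ord \<mu> ell" using kf' nu(2) .
          then have nl2: "ord \<nu> ell" using lin_trans[OF l nu(3)] by blast
          have "\<nu> \<noteq> ell"
          proof
            assume "\<nu> = ell"
            then have "ord ell \<mu>" using nu(3) by simp
            then show False using lin_antisym[OF l \<open>ord \<mu> ell\<close>] nu(2) nl by blast
          qed
          moreover have "\<nu> \<in> D f" unfolding D_def using nu(1) nl2 lf(1) unfolding ell_def by blast
          ultimately show "\<nu> \<in> D f - {ell}" by blast
        qed
        have lD: "ell \<in> D f" unfolding D_def using lf(1) WM[OF fW] lin_refl[OF l] unfolding ell_def by blast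
        have finD: "finite (D f)" unfolding D_def using finM by simp
        have "card (D f') < card (D f)"
        proof (rule psubset_card_mono[OF finD])
          show "D f' \<subset> D f" using sub lD by blast
        qed
        then have "f' \<in> pv.span B" using less.IH[of "card (D f')"] cn f'W by blast
        moreover have "sc c b \<in> pv.span B" by (rule pv.span_scale[OF pv.span_base[OF b(1)]])
        ultimately have "f' - sc c b \<in> pv.span B" by (rule pv.span_diff)
        then show ?thesis unfolding f'_def by simp
      qed
    qed
  qed
  show ?thesis using main by blast
qed

lemma finite_deg: "finite {m :: 'v::finite monom. mdeg m = t}"
proof -
  have inj: "inj_on lk {m :: 'v monom. mdeg m = t}"
  proof (rule inj_onI)
    fix x y :: "'v monom" assume "lk x = lk y"
    then show "x = y" by (intro poly_mapping_eqI) simp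
  qed
  define F where "F = {f::'v \<Rightarrow> nat. \<forall>x. (x \<in> UNIV \<longrightarrow> f x \<in> {..t}) \<and> (x \<notin> UNIV \<longrightarrow> f x = 0)}"
  have finF: "finite F" unfolding F_def by (rule finite_set_of_finite_funs) simp_all
  have "lk m \<in> F" if "mdeg m = t" for m :: "'v monom"
  proof -
    have "\<forall>x. lk m x \<le> t" using lookup_le_mdeg[of m] that by simp
    then show ?thesis unfolding F_def by simp
  qed
  then have "lk ` {m :: 'v monom. mdeg m = t} \<subseteq> F" by blast
  then have "finite (lk ` {m :: 'v monom. mdeg m = t})" using finF by (rule finite_subset)
  then show ?thesis using inj by (rule finite_imageD)
qed


theorem mainTheorem10:
  fixes G :: "('v::finite \<Rightarrow> 'v) set"
    and I :: "('v, 'k::field) mpoly set"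
    and ord :: "'v monom \<Rightarrow> 'v monom \<Rightarrow> bool"
    and d :: nat
  assumes "perm_group G"
    and "homogeneous_ideal I"
    and "monomial_order ord"
    and "acts_monomially G I d"
    and "generated_in_degrees_le (initial_ideal ord I) d"
  shows "\<forall>g\<in>G. act_poly g ` initial_ideal ord I = initial_ideal (twist_order ord (inv g)) I"
proof
  fix g assume gG: "g \<in> G"
  have g: "bij g" using assms(1) gG unfolding perm_group_def by blast
  have gi: "bij (inv g)" using g by (rule bij_imp_bij_inv)
  have I: "is_ideal I" using assms(2) unfolding homogeneous_ideal_def by blast
  have mo: "monomial_order ord" by (rule assms(3))
  define ord' where "ord' = twist_order ord (inv g)"
  have mo': "monomial_order ord'" unfolding ord'_def by (rule twist_mo[OF mo gi])
  have l: "lin ord" by (rule mo_lin[OF mo])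
  have l': "lin ord'" by (rule mo_lin[OF mo'])
  define L where "L = LM ord I"
  define L' where "L' = LM ord' I"
  have e5: "initial_ideal ord I = ideal_gen {f \<in> initial_ideal ord I. deg_le f d}"
    using assms(5) unfolding generated_in_degrees_le_def .
  have S1: "act_mon g \<mu> \<in> L'" if mu: "\<mu> \<in> L" for \<mu>
  proof -
    have s1: "Poly_Mapping.single \<mu> (1::'k) \<in> initial_ideal ord I"
      unfolding in_char[OF I mo] using mu unfolding L_def by simp
    have s2: "Poly_Mapping.single \<mu> (1::'k) \<in> ideal_gen {f \<in> initial_ideal ord I. deg_le f d}"
      by (subst e5[symmetric]) (rule s1)
    have s3: "\<mu> \<in> ks (Poly_Mapping.single \<mu> (1::'k))" by simp
    have "\<exists>t\<in>{f \<in> initial_ideal ord I. deg_le f d}. \<exists>\<nu>\<in>ks t. \<exists>\<alpha>. \<mu> = \<alpha> + \<nu>"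
      by (rule ideal_gen_keys[OF s2 s3])
    then obtain f \<nu> \<alpha> where f: "f \<in> {f \<in> initial_ideal ord I. deg_le f d}" "\<nu> \<in> ks f" "\<mu> = \<alpha> + \<nu>"
      by (elim bexE exE)
    have fin: "f \<in> initial_ideal ord I" "deg_le f d" using f(1) by auto
    have "ks f \<subseteq> LM ord I" using fin(1) unfolding in_char[OF I mo] by simp
    then have \<nu>L: "\<nu> \<in> LM ord I" using f(2) by blast
    have \<nu>d: "mdeg \<nu> \<le> d" using fin(2) f(2) unfolding deg_le_def mon_def by blast
    obtain h where h: "\<nu> = lead_mon ord h" "h \<in> I" "h \<noteq> 0" using LME[OF \<nu>L] by blast
    define ht where "ht = hcomp (mdeg \<nu>) h"
    have ht: "ht \<noteq> 0" "lead_mon ord ht = \<nu>" using lead_comp[OF l h(3)] h(1) unfolding ht_def by simp_all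
    have htI: "ht \<in> I" unfolding ht_def by (rule comp_in_ideal[OF assms(2) h(2)])
    have htd: "deg_le ht d" unfolding deg_le_def mon_def ht_def keys_comp using \<nu>d by auto
    have "\<forall>g\<in>G. \<exists>h'\<in>I. mon h' = mon (act_poly g ht)"
      using assms(4) htI htd unfolding acts_monomially_def by blast
    then obtain h'' where h'': "h'' \<in> I" "mon h'' = mon (act_poly g ht)" using gG by blast
    have kh: "ks h'' = act_mon g ` ks ht" using h''(2) keys_act_poly[OF g] unfolding mon_def by simp
    have h''nz: "h'' \<noteq> 0"
    proof
      assume "h'' = 0"
      then have "ks ht = {}" using kh by simp
      then show False using ht(1) by simp
    qed
    have "lead_mon ord' h'' = act_mon g \<nu>"
      unfolding ord'_def using lead_twist_image[OF mo g ht(1) kh] ht(2) by simp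
    then have "act_mon g \<nu> \<in> L'" using LMI[OF h''(1) h''nz, of ord'] unfolding L'_def by simp
    then have "act_mon g \<alpha> + act_mon g \<nu> \<in> L'" unfolding L'_def by (rule LM_up[OF I mo'])
    then show ?thesis using f(3) by (simp add: act_mon_add)
  qed
  have deg: "mdeg (act_mon g \<mu>) = mdeg \<mu>" for \<mu> by (rule mdeg_act_mon[OF g])
  have S2: "\<nu>' \<in> act_mon g ` L" if nu: "\<nu>' \<in> L'" for \<nu>'
  proof -
    define t where "t = mdeg \<nu>'"
    define M where "M = {m :: 'v monom. mdeg m = t}"
    have finM: "finite M" unfolding M_def by (rule finite_deg)
    define A where "A = L \<inter> M"
    define A' where "A' = L' \<inter> M"
    have finA: "finite A" "finite A'" using finM unfolding A_def A'_def by auto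
    have gA: "act_mon g ` A \<subseteq> A'"
    proof
      fix x assume "x \<in> act_mon g ` A"
      then obtain \<mu> where "\<mu> \<in> L" "mdeg \<mu> = t" "x = act_mon g \<mu>" unfolding A_def M_def by blast
      then show "x \<in> A'" unfolding A'_def M_def using S1 deg by simp
    qed
    have exc: "\<exists>c. c \<in> I \<and> c \<noteq> 0 \<and> ks c \<subseteq> M \<and> lead_mon ord' c = la" if lam: "la \<in> A'" for la
    proof -
      have la1: "la \<in> LM ord' I" and la2: "mdeg la = t" using lam unfolding A'_def L'_def M_def by auto
      obtain h where h: "la = lead_mon ord' h" "h \<in> I" "h \<noteq> 0" using LME[OF la1] by blast
      have c1: "hcomp (mdeg la) h \<in> I" by (rule comp_in_ideal[OF assms(2) h(2)])
      have c2: "hcomp (mdeg la) h \<noteq> 0" "lead_mon ord' (hcomp (mdeg la) h) = la"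
        using lead_comp[OF l' h(3)] h(1) by simp_all
      have c3: "ks (hcomp (mdeg la) h) \<subseteq> M" unfolding M_def keys_comp using la2 by auto
      show ?thesis using c1 c2 c3 by blast
    qed
    have exb: "\<exists>c. c \<in> I \<and> c \<noteq> 0 \<and> ks c \<subseteq> M \<and> lead_mon ord c = la" if lam: "la \<in> A" for la
    proof -
      have la1: "la \<in> LM ord I" and la2: "mdeg la = t" using lam unfolding A_def L_def M_def by auto
      obtain h where h: "la = lead_mon ord h" "h \<in> I" "h \<noteq> 0" using LME[OF la1] by blast
      have c1: "hcomp (mdeg la) h \<in> I" by (rule comp_in_ideal[OF assms(2) h(2)])
      have c2: "hcomp (mdeg la) h \<noteq> 0" "lead_mon ord (hcomp (mdeg la) h) = la"
        using lead_comp[OF l h(3)] h(1) by simp_all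
      have c3: "ks (hcomp (mdeg la) h) \<subseteq> M" unfolding M_def keys_comp using la2 by auto
      show ?thesis using c1 c2 c3 by blast
    qed
    have "\<forall>la\<in>A'. \<exists>c. c \<in> I \<and> c \<noteq> 0 \<and> ks c \<subseteq> M \<and> lead_mon ord' c = la" using exc by blast
    from bchoice[OF this] obtain hc where
      hc: "\<forall>la\<in>A'. hc la \<in> I \<and> hc la \<noteq> 0 \<and> ks (hc la) \<subseteq> M \<and> lead_mon ord' (hc la) = la" by blast
    have "\<forall>la\<in>A. \<exists>c. c \<in> I \<and> c \<noteq> 0 \<and> ks c \<subseteq> M \<and> lead_mon ord c = la" using exb by blast
    from bchoice[OF this] obtain bb where
      bb: "\<forall>la\<in>A. bb la \<in> I \<and> bb la \<noteq> 0 \<and> ks (bb la) \<subseteq> M \<and> lead_mon ord (bb la) = la" by blast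
    define W where "W = {f \<in> I. ks f \<subseteq> M}"
    define B where "B = bb ` A"
    define C where "C = hc ` A'"
    have span: "W \<subseteq> pv.span B"
    proof (rule span_leads[OF l finM])
      show "\<And>f. f \<in> W \<Longrightarrow> ks f \<subseteq> M" unfolding W_def by blast
    next
      fix f b c assume fb: "f \<in> W" "b \<in> W"
      have "f + sc c b \<in> I" using fb unfolding W_def by (simp add: ideal_add[OF I] ideal_sc[OF I])
      moreover have "ks (f + sc c b) \<subseteq> M"
      proof -
        have "ks (f + sc c b) \<subseteq> ks f \<union> ks (sc c b)" by (rule keys_add)
        also have "\<dots> \<subseteq> ks f \<union> ks b" using keys_sc[of c b] by blast
        also have "\<dots> \<subseteq> M" using fb unfolding W_def by blast
        finally show ?thesis .
      qed
      ultimately show "f + sc c b \<in> W" unfolding W_def by blast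
    next
      show "B \<subseteq> W" unfolding B_def W_def using bb by auto
    next
      show "0 \<notin> B" unfolding B_def using bb by auto
    next
      fix f assume f: "f \<in> W" "f \<noteq> 0"
      have fI: "f \<in> I" and fM: "ks f \<subseteq> M" using f(1) unfolding W_def by auto
      have "lead_mon ord f \<in> L" unfolding L_def by (rule LMI[OF fI f(2)])
      moreover have "lead_mon ord f \<in> M" using lead_in(1)[OF l f(2)] fM by blast
      ultimately have fa: "lead_mon ord f \<in> A" unfolding A_def by blast
      then have "bb (lead_mon ord f) \<in> B" unfolding B_def by blast
      moreover have "lead_mon ord (bb (lead_mon ord f)) = lead_mon ord f" using bb fa by blast
      ultimately show "\<exists>b\<in>B. lead_mon ord b = lead_mon ord f" by blast
    qed
    have injhc: "inj_on hc A'"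
    proof (rule inj_onI)
      fix x y assume "x \<in> A'" "y \<in> A'" "hc x = hc y"
      then show "x = y" using hc by metis
    qed
    have indep: "pv.independent C"
    proof (rule indep_leads[OF l'])
      show "finite C" unfolding C_def using finA(2) by simp
      show "0 \<notin> C" unfolding C_def using hc by auto
      show "inj_on (lead_mon ord') C"
      proof (rule inj_onI)
        fix x y assume "x \<in> C" "y \<in> C" "lead_mon ord' x = lead_mon ord' y"
        then obtain a b where "a \<in> A'" "b \<in> A'" "x = hc a" "y = hc b" "lead_mon ord' x = lead_mon ord' y"
          unfolding C_def by blast
        then show "x = y" using hc by metis
      qed
    qed
    have CW: "C \<subseteq> W" unfolding C_def W_def using hc by auto
    have finB: "finite B" unfolding B_def using finA(1) by simp
    have "finite C \<and> card C \<le> card B"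
      by (rule pv.independent_span_bound[OF finB indep]) (use CW span in blast)
    then have c1: "card C \<le> card B" by blast
    have c2: "card B \<le> card A" unfolding B_def by (rule card_image_le[OF finA(1)])
    have c3: "card C = card A'" unfolding C_def by (rule card_image[OF injhc])
    have c4: "card (act_mon g ` A) = card A"
      by (rule card_image) (rule inj_on_subset[OF act_mon_inj[OF g]], simp)
    have "act_mon g ` A = A'"
      by (rule card_seteq[OF finA(2) gA]) (use c1 c2 c3 c4 in simp)
    moreover have "\<nu>' \<in> A'" unfolding A'_def M_def t_def using nu by simp
    ultimately show ?thesis unfolding A_def by blast
  qed
  have key: "act_mon g ` L = L'" using S1 S2 by blast
  have dir1: "ks (act_poly g f) \<subseteq> LM ord' I" if f: "ks f \<subseteq> LM ord I" for f :: "('v, 'k) mpoly"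
  proof -
    have "ks (act_poly g f) = act_mon g ` ks f" using keys_act_poly[OF g] by simp
    also have "\<dots> \<subseteq> act_mon g ` L" using f unfolding L_def by blast
    finally show ?thesis using key unfolding L'_def by simp
  qed
  have dir2: "f \<in> act_poly g ` {f. ks f \<subseteq> LM ord I}" if f: "ks f \<subseteq> LM ord' I" for f :: "('v, 'k) mpoly"
  proof -
    have "ks (act_poly (inv g) f) \<subseteq> LM ord I"
    proof
      fix m assume "m \<in> ks (act_poly (inv g) f)"
      then obtain m0 where m0: "m0 \<in> ks f" "m = act_mon (inv g) m0" using keys_act_poly[OF gi] by blast
      have "m0 \<in> act_mon g ` L" using f m0(1) key unfolding L'_def by blast
      then obtain \<mu> where mu: "\<mu> \<in> L" "m0 = act_mon g \<mu>" by blast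
      then have "m = \<mu>" using m0(2) act_mon_inv_cancel[OF g] by simp
      then show "m \<in> LM ord I" using mu(1) unfolding L_def by simp
    qed
    then have "act_poly (inv g) f \<in> {f. ks f \<subseteq> LM ord I}" by simp
    moreover have "f = act_poly g (act_poly (inv g) f)" by (rule act_poly_inv[OF g, symmetric])
    ultimately show ?thesis by (rule rev_image_eqI)
  qed
  have "act_poly g ` initial_ideal ord I = initial_ideal ord' I"
    unfolding in_char[OF I mo] in_char[OF I mo']
    apply (rule equalityI)
     apply (rule image_subsetI, rule CollectI, rule dir1, simp)
    apply (rule subsetI, rule dir2, simp)
    done
  then show "act_poly g ` initial_ideal ord I = initial_ideal (twist_order ord (inv g)) I"
    unfolding ord'_def .
qed

end
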